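(* Let $T>0$. Let $g\in C^1(\mathbb{R})$ be an odd function with $\sup_{x\in\mathbb{R}}|g'(x)|<2/T^2$, and let $k:\mathbb{R}\to\mathbb{R}$ be a continuous, odd, $T$-periodic function with $\frac{1}{T}\int_0^T k(t)\,dt=0$. Then the equation $$u''+g(u)=k(t)$$ has exactly one solution $u\in C^2(\mathbb{R})$ that is odd and $T$-periodic.
   Context: A function $h$ is odd if $h(-x)=-h(x)$ for all $x$. *)

theory Defs
  imports "HOL-Analysis.Analysis"
begin

definition odd_fun :: "(real \<Rightarrow> real) \<Rightarrow> bool" where
  "odd_fun h \<longleftrightarrow> (\<forall>x. h (-x) = - h x)"

definition periodic_fun :: "real \<Rightarrow> (real \<Rightarrow> real) \<Rightarrow> bool" where
  "periodic_fun T h \<longleftrightarrow> (\<forall>x. h (x + T) = h x)"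

definition C1_with_deriv :: "(real \<Rightarrow> real) \<Rightarrow> (real \<Rightarrow> real) \<Rightarrow> bool" where
  "C1_with_deriv f f' \<longleftrightarrow> (\<forall>x. (f has_real_derivative f' x) (at x)) \<and> continuous_on UNIV f'"

definition C2_solution :: "(real \<Rightarrow> real) \<Rightarrow> (real \<Rightarrow> real) \<Rightarrow> (real \<Rightarrow> real) \<Rightarrow> bool" where
  "C2_solution g k u \<longleftrightarrow> (\<exists>u' u''. (\<forall>t. (u has_real_derivative u' t) (at t))
      \<and> (\<forall>t. (u' has_real_derivative u'' t) (at t)) \<and> continuous_on UNIV u''
      \<and> (\<forall>t. u'' t + g (u t) = k t))"

end

theory Submission
  imports Defs
begin

lemma antideriv_exists:
  fixes f :: "real \<Rightarrow> real"
  assumes cf: "continuous_on UNIV f"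
  shows "\<exists>F. F 0 = 0 \<and> (\<forall>t. (F has_real_derivative f t) (at t))"
proof -
  define F where "F t = (if 0 \<le> t then integral {0..t} f else - integral {t..0} f)" for t
  have "(F has_real_derivative f t) (at t)" for t
  proof -
    define R where "R = \<bar>t\<bar> + 1"
    define G where "G x = integral {-R..x} f - integral {-R..0} f" for x
    have int: "f integrable_on {-R..R}"
      by (rule integrable_continuous_real) (rule continuous_on_subset[OF cf], simp)
    have eq: "F x = G x" if "x \<in> {-R<..<R}" for x
    proof (cases "0 \<le> x")
      case True
      have fi: "f integrable_on {-R..x}" by (rule integrable_subinterval_real[OF int]) (use that in auto)
      have i1: "-R \<le> 0" using R_def by simp
      have "integral {-R..0} f + integral {0..x} f = integral {-R..x} f"
        by (rule Henstock_Kurzweil_Integration.integral_combine[OF i1 True fi])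
      moreover have "F x = integral {0..x} f" unfolding F_def by (rule if_P[OF True])
      ultimately show ?thesis unfolding G_def by linarith
    next
      case False
      have fi: "f integrable_on {-R..0}" by (rule integrable_subinterval_real[OF int]) (use R_def in auto)
      have i1: "-R \<le> x" using that by simp
      have i2: "x \<le> 0" using False by simp
      have "integral {-R..x} f + integral {x..0} f = integral {-R..0} f"
        by (rule Henstock_Kurzweil_Integration.integral_combine[OF i1 i2 fi])
      moreover have "F x = - integral {x..0} f" unfolding F_def by (rule if_not_P[OF False])
      ultimately show ?thesis unfolding G_def by linarith
    qed
    have tin: "t \<in> {-R..R}" unfolding R_def by auto
    have "((\<lambda>x. integral {-R..x} f) has_real_derivative f t) (at t within {-R..R})"
      by (rule integral_has_real_derivative[OF continuous_on_subset[OF cf] tin]) simp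
    then have Gw: "(G has_real_derivative f t) (at t within {-R..R})"
      unfolding G_def by (auto intro!: derivative_eq_intros)
    have ti: "t \<in> interior {-R..R}" unfolding R_def by auto
    have G': "(G has_real_derivative f t) (at t)"
      using Gw unfolding at_within_interior[OF ti] .
    have tt: "t \<in> {-R<..<R}" unfolding R_def by auto
    show ?thesis
      by (rule has_field_derivative_transform_within_open[OF G' open_greaterThanLessThan tt]) (rule eq[symmetric])
  qed
  moreover have "F 0 = 0" unfolding F_def by simp
  ultimately show ?thesis by blast
qed


definition prim :: "(real \<Rightarrow> real) \<Rightarrow> real \<Rightarrow> real" where
  "prim f = (SOME F. F 0 = 0 \<and> (\<forall>t. (F has_real_derivative f t) (at t)))"

lemma prim:
  assumes "continuous_on UNIV f"
  shows "prim f 0 = 0" "\<And>t. (prim f has_real_derivative f t) (at t)"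
  using someI_ex[OF antideriv_exists[OF assms]] unfolding prim_def by auto

lemma deriv_cont:
  assumes "\<And>t. (h has_real_derivative h1 t) (at t)"
  shows "continuous_on UNIV h"
  by (meson DERIV_continuous assms continuous_at_imp_continuous_on)

lemma prim_cont: "continuous_on UNIV f \<Longrightarrow> continuous_on UNIV (prim f)"
  by (rule deriv_cont, rule prim(2))

lemma lin2:
  fixes h h1 :: "real \<Rightarrow> real"
  assumes d1: "\<And>t. (h has_real_derivative h1 t) (at t)"
    and d2: "\<And>t. (h1 has_real_derivative 0) (at t)"
  shows "h t = h a + h1 a * (t - a)"
proof -
  have c: "h1 x = h1 a" for x using d2 DERIV_isconst_all by blast
  have "((\<lambda>t. h t - h1 a * t) has_real_derivative 0) (at x)" for x
    using d1[of x] c[of x] by (auto intro!: derivative_eq_intros)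
  then have "h t - h1 a * t = h a - h1 a * a" using DERIV_isconst_all by blast
  then show ?thesis by (simp add: algebra_simps)
qed

lemma prim_diff:
  assumes "continuous_on UNIV f1" "continuous_on UNIV f2"
  shows "prim (\<lambda>s. f1 s - f2 s) t = prim f1 t - prim f2 t"
proof -
  have c: "continuous_on UNIV (\<lambda>s. f1 s - f2 s)" using assms by (intro continuous_intros)
  have "((\<lambda>t. prim (\<lambda>s. f1 s - f2 s) t - (prim f1 t - prim f2 t)) has_real_derivative 0) (at x)" for x
    using prim(2)[OF c, of x] prim(2)[OF assms(1), of x] prim(2)[OF assms(2), of x]
    by (auto intro!: derivative_eq_intros)
  then have "prim (\<lambda>s. f1 s - f2 s) t - (prim f1 t - prim f2 t) = prim (\<lambda>s. f1 s - f2 s) 0 - (prim f1 0 - prim f2 0)"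
    using DERIV_isconst_all by blast
  then show ?thesis using prim(1)[OF c] prim(1)[OF assms(1)] prim(1)[OF assms(2)] by simp
qed

definition AA :: "(real \<Rightarrow> real) \<Rightarrow> real \<Rightarrow> real" where "AA f = prim (prim f)"
definition WW :: "real \<Rightarrow> (real \<Rightarrow> real) \<Rightarrow> real \<Rightarrow> real" where
  "WW l f t = AA f t - t / l * AA f l"

lemma AA:
  assumes "continuous_on UNIV f"
  shows "AA f 0 = 0" "\<And>t. (AA f has_real_derivative prim f t) (at t)"
  using prim[OF prim_cont[OF assms]] unfolding AA_def by auto

lemma AA_diff:
  assumes "continuous_on UNIV f1" "continuous_on UNIV f2"
  shows "AA (\<lambda>s. f1 s - f2 s) t = AA f1 t - AA f2 t"
proof -
  have "prim (\<lambda>s. f1 s - f2 s) = (\<lambda>t. prim f1 t - prim f2 t)"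
    using prim_diff[OF assms] by auto
  then show ?thesis unfolding AA_def
    using prim_diff[OF prim_cont[OF assms(1)] prim_cont[OF assms(2)]] by simp
qed

lemma WW_diff:
  assumes "continuous_on UNIV f1" "continuous_on UNIV f2"
  shows "WW l (\<lambda>s. f1 s - f2 s) t = WW l f1 t - WW l f2 t"
  unfolding WW_def AA_diff[OF assms] by (simp add: algebra_simps)

lemma WW_deriv:
  assumes "continuous_on UNIV f" "l \<noteq> 0"
  shows "(WW l f has_real_derivative (prim f t - AA f l / l)) (at t)"
    "((\<lambda>t. prim f t - AA f l / l) has_real_derivative f t) (at t)"
  unfolding WW_def using AA(2)[OF assms(1), of t] prim(2)[OF assms(1), of t] assms(2)
  by (auto intro!: derivative_eq_intros)

lemma WW0: "continuous_on UNIV f \<Longrightarrow> WW l f 0 = 0"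
  unfolding WW_def using AA(1) by simp

lemma WWl: "l \<noteq> 0 \<Longrightarrow> WW l f l = 0"
  unfolding WW_def by simp


lemma WW_odd:
  assumes cf: "continuous_on UNIV f" and od: "odd_fun f" and l: "l \<noteq> 0"
  shows "odd_fun (WW l f)"
proof -
  define w1 where "w1 t = prim f t - AA f l / l" for t
  have D1: "(WW l f has_real_derivative w1 t) (at t)" for t
    unfolding w1_def by (rule WW_deriv(1)[OF cf l])
  have D2: "(w1 has_real_derivative f t) (at t)" for t
    unfolding w1_def by (rule WW_deriv(2)[OF cf l])
  define d where "d t = WW l f t + WW l f (-t)" for t
  define d1 where "d1 t = w1 t - w1 (-t)" for t
  have "(d has_real_derivative d1 t) (at t)" for t
  proof -
    have "((\<lambda>t. WW l f (-t)) has_real_derivative w1 (-t) * (-1)) (at t)"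
      by (rule DERIV_chain2[OF D1]) (auto intro!: derivative_eq_intros)
    then show ?thesis unfolding d_def d1_def using D1[of t]
      by (auto intro!: derivative_eq_intros)
  qed
  moreover have "(d1 has_real_derivative 0) (at t)" for t
  proof -
    have "((\<lambda>t. w1 (-t)) has_real_derivative f (-t) * (-1)) (at t)"
      by (rule DERIV_chain2[OF D2]) (auto intro!: derivative_eq_intros)
    then have "(d1 has_real_derivative f t - f (-t) * (-1)) (at t)"
      unfolding d1_def using D2[of t] by (auto intro!: derivative_eq_intros)
    moreover have "f t - f (-t) * (-1) = 0" using od unfolding odd_fun_def by simp
    ultimately show ?thesis by simp
  qed
  ultimately have "d t = d 0 + d1 0 * (t - 0)" for t by (rule lin2)
  then have "d t = 0" for t unfolding d_def d1_def using WW0[OF cf, of l] by simp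
  then show ?thesis unfolding odd_fun_def d_def by (simp add: add_eq_0_iff)
qed

lemma prim_even:
  assumes cf: "continuous_on UNIV f" and od: "odd_fun f"
  shows "prim f (-t) = prim f t"
proof -
  define p where "p t = prim f t - prim f (-t)" for t
  have "(p has_real_derivative 0) (at x)" for x
  proof -
    have "((\<lambda>t. prim f (-t)) has_real_derivative f (-x) * (-1)) (at x)"
      by (rule DERIV_chain2[OF prim(2)[OF cf]]) (auto intro!: derivative_eq_intros)
    then have "(p has_real_derivative f x - f (-x) * (-1)) (at x)"
      unfolding p_def using prim(2)[OF cf, of x] by (auto intro!: derivative_eq_intros)
    moreover have "f x - f (-x) * (-1) = 0" using od unfolding odd_fun_def by simp
    ultimately show ?thesis by simp
  qed
  then have "p t = p 0" using DERIV_isconst_all by blast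
  then show ?thesis unfolding p_def by simp
qed

lemma WW_periodic:
  assumes cf: "continuous_on UNIV f" and od: "odd_fun f" and per: "periodic_fun T f"
    and T: "T = 2 * l" and l: "l > 0"
  shows "periodic_fun T (WW l f)"
proof -
  have l0: "l \<noteq> 0" using l by simp
  define w1 where "w1 t = prim f t - AA f l / l" for t
  have D1: "(WW l f has_real_derivative w1 t) (at t)" for t
    unfolding w1_def by (rule WW_deriv(1)[OF cf l0])
  have D2: "(w1 has_real_derivative f t) (at t)" for t
    unfolding w1_def by (rule WW_deriv(2)[OF cf l0])
  define e where "e t = WW l f (t + T) - WW l f t" for t
  define e1 where "e1 t = w1 (t + T) - w1 t" for t
  have "(e has_real_derivative e1 t) (at t)" for t
  proof -
    have "((\<lambda>t. WW l f (t + T)) has_real_derivative w1 (t + T) * 1) (at t)"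
      by (rule DERIV_chain2[OF D1]) (auto intro!: derivative_eq_intros)
    then show ?thesis unfolding e_def e1_def using D1[of t]
      by (auto intro!: derivative_eq_intros)
  qed
  moreover have "(e1 has_real_derivative 0) (at t)" for t
  proof -
    have "((\<lambda>t. w1 (t + T)) has_real_derivative f (t + T) * 1) (at t)"
      by (rule DERIV_chain2[OF D2]) (auto intro!: derivative_eq_intros)
    then have "(e1 has_real_derivative f (t + T) * 1 - f t) (at t)"
      unfolding e1_def using D2[of t] by (auto intro!: derivative_eq_intros)
    moreover have "f (t + T) * 1 - f t = 0" using per unfolding periodic_fun_def by simp
    ultimately show ?thesis by simp
  qed
  ultimately have lin: "e t = e (-l) + e1 (-l) * (t - (-l))" for t by (rule lin2)
  have odW: "odd_fun (WW l f)" by (rule WW_odd[OF cf od l0])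
  have "e (-l) = 0"
    using WWl[OF l0, of f] odW[unfolded odd_fun_def, rule_format, of l]
    unfolding e_def T by simp
  moreover have "e1 (-l) = 0"
    using prim_even[OF cf od, of l] unfolding e1_def w1_def T by simp
  ultimately have "e t = 0" for t using lin[of t] by simp
  then show ?thesis unfolding periodic_fun_def e_def by simp
qed

lemma periodic_nat:
  assumes per: "periodic_fun T h"
  shows "h (y + real m * T) = h y"
proof (induction m)
    case 0 then show ?case by simp
  next
    case (Suc m)
    have P: "h (z + T) = h z" for z using per unfolding periodic_fun_def by blast
    have e: "y + real (Suc m) * T = (y + real m * T) + T" by (simp add: algebra_simps)
    show ?case unfolding e P[of "y + real m * T"] by (rule Suc)
qed

lemma periodic_int:
  assumes per: "periodic_fun T h"
  shows "h (x + real_of_int n * T) = h x"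
proof (cases "n \<ge> 0")
    case True
    then obtain m where m: "n = int m" using nonneg_int_cases by blast
    have rn: "real_of_int n = real m" using m by simp
    show ?thesis unfolding rn by (rule periodic_nat[OF per])
  next
    case False
    then have "-n \<ge> 0" by simp
    then obtain m where "-n = int m" using nonneg_int_cases by blast
    then have m: "n = - int m" by simp
    have rn: "real_of_int n = - real m" using m by simp
    have e: "x - real m * T + real m * T = x" by simp
    have "h (x - real m * T + real m * T) = h (x - real m * T)" by (rule periodic_nat[OF per])
    then have "h x = h (x - real m * T)" unfolding e .
    moreover have "x + - real m * T = x - real m * T" by simp
    ultimately show ?thesis unfolding rn by simp
qed

lemma reduce:
  assumes od: "odd_fun h" and per: "periodic_fun T h" and T: "T = 2 * l" and l: "l > 0"
  shows "\<exists>t'\<in>{0..l}. \<bar>h t\<bar> = \<bar>h t'\<bar>"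
proof -
  define n where "n = floor ((t + l) / T)"
  define t1 where "t1 = t - real_of_int n * T"
  have Tp: "T > 0" using T l by simp
  have "real_of_int n \<le> (t + l) / T" "(t + l) / T < real_of_int n + 1"
    unfolding n_def by linarith+
  then have "real_of_int n * T \<le> t + l" "t + l < (real_of_int n + 1) * T"
    using Tp by (simp_all add: field_simps)
  then have b: "-l \<le> t1" "t1 < l" unfolding t1_def T by (simp_all add: algebra_simps)
  have "h t = h (t1 + real_of_int n * T)" unfolding t1_def by simp
  also have "\<dots> = h t1" by (rule periodic_int[OF per])
  finally have ht: "h t = h t1" .
  show ?thesis
  proof (cases "t1 \<ge> 0")
    case True then show ?thesis using ht b by (intro bexI[of _ t1]) auto
  next
    case False
    have "h t1 = - h (-t1)" using od unfolding odd_fun_def by (metis minus_minus)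
    then show ?thesis using ht b False by (intro bexI[of _ "-t1"]) auto
  qed
qed

lemma prim_bound:
  assumes cf: "continuous_on UNIV f" and M: "\<forall>s\<in>{0..l}. \<bar>f s\<bar> \<le> M"
    and s: "s \<in> {0..l}"
  shows "\<bar>prim f s\<bar> \<le> M * s"
proof (cases "s = 0")
  case True then show ?thesis using prim(1)[OF cf] by simp
next
  case False
  then have "0 < s" using s by simp
  from MVT2[OF this, of "prim f" f] prim(2)[OF cf] obtain z where
    z: "0 < z" "z < s" "prim f s - prim f 0 = (s - 0) * f z" by blast
  have "\<bar>f z\<bar> \<le> M" using M z s by auto
  then have "\<bar>s * f z\<bar> \<le> s * M" using \<open>0 < s\<close> by (simp add: abs_mult mult_left_mono)
  then show ?thesis using z prim(1)[OF cf] by (simp add: algebra_simps)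
qed

lemma AA_bound:
  assumes cf: "continuous_on UNIV f" and M: "\<forall>s\<in>{0..l}. \<bar>f s\<bar> \<le> M"
    and t: "t \<in> {0..l}"
  shows "\<bar>AA f t\<bar> \<le> M * l * t"
proof (cases "t = 0")
  case True then show ?thesis using AA(1)[OF cf] by simp
next
  case False
  then have t0: "0 < t" using t by simp
  have M0: "0 \<le> M" using M t by (metis abs_ge_zero atLeastAtMost_iff order_trans order.refl t0 less_imp_le)
  from MVT2[OF t0, of "AA f" "prim f"] AA(2)[OF cf] obtain z where
    z: "0 < z" "z < t" "AA f t - AA f 0 = (t - 0) * prim f z" by blast
  have "\<bar>prim f z\<bar> \<le> M * z" using prim_bound[OF cf M, of z] z t by auto
  also have "\<dots> \<le> M * l" using z t M0 by (auto intro: mult_left_mono)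
  finally have "\<bar>t * prim f z\<bar> \<le> t * (M * l)" using t0 by (simp add: abs_mult mult_left_mono)
  then show ?thesis using z AA(1)[OF cf] by (simp add: algebra_simps)
qed

lemma WW_bound_local:
  assumes cf: "continuous_on UNIV f" and M: "\<forall>s\<in>{0..l}. \<bar>f s\<bar> \<le> M"
    and t: "t \<in> {0..l}" and l: "l > 0"
  shows "\<bar>WW l f t\<bar> \<le> 2 * M * l^2"
proof -
  have M0: "0 \<le> M" using M l by (metis abs_ge_zero atLeastAtMost_iff order_trans order.refl less_imp_le)
  have a1: "\<bar>AA f t\<bar> \<le> M * l * l"
    using AA_bound[OF cf M t] t M0 l
    by (smt (verit) atLeastAtMost_iff mult_left_mono mult_nonneg_nonneg)
  have a2: "\<bar>AA f l\<bar> \<le> M * l * l" using AA_bound[OF cf M, of l] l by simp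
  have "\<bar>t / l * AA f l\<bar> = (t / l) * \<bar>AA f l\<bar>" using t l by (simp add: abs_mult)
  also have "\<dots> \<le> 1 * (M * l * l)"
    using a2 t l by (intro mult_mono) (auto simp: divide_le_eq)
  finally have "\<bar>t / l * AA f l\<bar> \<le> M * l * l" by simp
  moreover have "2 * M * l^2 = M * l * l + M * l * l" by (simp add: power2_eq_square)
  moreover have "\<bar>AA f t - t / l * AA f l\<bar> \<le> \<bar>AA f t\<bar> + \<bar>t / l * AA f l\<bar>" by (rule abs_triangle_ineq4)
  ultimately show ?thesis using a1 unfolding WW_def by (smt (verit))
qed

lemma WW_bound:
  assumes cf: "continuous_on UNIV f" and od: "odd_fun f" and per: "periodic_fun T f"
    and T: "T = 2 * l" and l: "l > 0" and M: "\<forall>s\<in>{0..l}. \<bar>f s\<bar> \<le> M"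
  shows "\<bar>WW l f t\<bar> \<le> 2 * M * l^2"
proof -
  obtain t' where "t' \<in> {0..l}" "\<bar>WW l f t\<bar> = \<bar>WW l f t'\<bar>"
    using reduce[OF WW_odd[OF cf od] WW_periodic[OF cf od per T l] T l] l by fastforce
  then show ?thesis using WW_bound_local[OF cf M _ l] by simp
qed


lemma WW_bcontfun:
  assumes cf: "continuous_on UNIV f" and od: "odd_fun f" and per: "periodic_fun T f"
    and T: "T = 2 * l" and l: "l > 0"
  shows "WW l f \<in> bcontfun"
proof -
  have "compact (f ` {0..l})" by (rule compact_continuous_image[OF continuous_on_subset[OF cf]]) auto
  then obtain B where B: "\<forall>x\<in>f ` {0..l}. norm x \<le> B" using compact_imp_bounded bounded_iff by metis
  then have M: "\<forall>s\<in>{0..l}. \<bar>f s\<bar> \<le> B" by auto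
  have l0: "l \<noteq> 0" using l by simp
  show ?thesis
  proof (rule bcontfun_normI)
    show "continuous_on UNIV (WW l f)" by (rule deriv_cont, rule WW_deriv(1)[OF cf l0])
    show "norm (WW l f x) \<le> 2 * B * l^2" for x using WW_bound[OF cf od per T l M] by simp
  qed
qed

lemma lipschitz_g:
  fixes g g' :: "real \<Rightarrow> real"
  assumes d: "\<And>x. (g has_real_derivative g' x) (at x)" and c: "\<forall>x. \<bar>g' x\<bar> \<le> c"
  shows "\<bar>g x - g y\<bar> \<le> c * \<bar>x - y\<bar>"
proof -
  have *: "\<bar>g b - g a\<bar> \<le> c * \<bar>b - a\<bar>" if "a < b" for a b
  proof -
    from MVT2[OF that, of g g'] d obtain z where z: "g b - g a = (b - a) * g' z" by blast
    have "\<bar>(b - a) * g' z\<bar> = (b - a) * \<bar>g' z\<bar>" using that by (simp add: abs_mult)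
    also have "\<dots> \<le> (b - a) * c" using c that by (intro mult_left_mono) auto
    finally show ?thesis using z that by (simp add: algebra_simps)
  qed
  consider "x < y" | "x = y" | "y < x" by linarith
  then show ?thesis
  proof cases
    case 1 then show ?thesis using *[OF 1] by (simp add: abs_minus_commute)
  next
    case 2 then show ?thesis by simp
  next
    case 3 then show ?thesis using *[OF 3] by simp
  qed
qed

lemma fixed_char:
  fixes w w1 w2 g k :: "real \<Rightarrow> real"
  assumes d1: "\<And>t. (w has_real_derivative w1 t) (at t)"
    and d2: "\<And>t. (w1 has_real_derivative w2 t) (at t)"
    and eq: "\<And>t. w2 t + g (w t) = k t"
    and od: "odd_fun w" and per: "periodic_fun T w" and T: "T = 2 * l" and l: "l > 0"
    and cf: "continuous_on UNIV (\<lambda>s. k s - g (w s))"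
  shows "w t = WW l (\<lambda>s. k s - g (w s)) t"
proof -
  define f where "f = (\<lambda>s. k s - g (w s))"
  have cf': "continuous_on UNIV f" using cf unfolding f_def .
  have l0: "l \<noteq> 0" using l by simp
  define h where "h t = w t - WW l f t" for t
  define h1 where "h1 t = w1 t - (prim f t - AA f l / l)" for t
  have "(h has_real_derivative h1 t) (at t)" for t
    unfolding h_def h1_def using d1[of t] WW_deriv(1)[OF cf' l0, of t]
    by (auto intro!: derivative_eq_intros)
  moreover have "(h1 has_real_derivative 0) (at t)" for t
  proof -
    have "(h1 has_real_derivative w2 t - f t) (at t)"
      unfolding h1_def using d2[of t] prim(2)[OF cf', of t]
      by (auto intro!: derivative_eq_intros)
    moreover have "w2 t - f t = 0" using eq[of t] unfolding f_def by simp
    ultimately show ?thesis by simp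
  qed
  ultimately have lin: "h t = h 0 + h1 0 * (t - 0)" for t by (rule lin2)
  have "w (-0) = - w 0" using od unfolding odd_fun_def by blast
  then have w0: "w 0 = 0" by simp
  have "w l = w (-l + T)" unfolding T by simp
  also have "\<dots> = w (-l)" using per unfolding periodic_fun_def by blast
  also have "\<dots> = - w l" using od unfolding odd_fun_def by blast
  finally have wl: "w l = 0" by simp
  have h0: "h 0 = 0" unfolding h_def using w0 WW0[OF cf', of l] by simp
  have "h l = 0" unfolding h_def using wl WWl[OF l0, of f] by simp
  then have "h1 0 * l = 0" using lin[of l] h0 by simp
  then have "h1 0 = 0" using l0 by simp
  then have "h t = 0" using lin[of t] h0 by simp
  then show ?thesis unfolding h_def f_def by simp
qed

lemma eval_cont: "continuous_on UNIV (\<lambda>v::real \<Rightarrow>\<^sub>C real. apply_bcontfun v x)"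
  unfolding continuous_on_iff
proof (intro ballI allI impI)
  fix v :: "real \<Rightarrow>\<^sub>C real" and e :: real
  assume "e > 0"
  show "\<exists>d>0. \<forall>v'\<in>UNIV. dist v' v < d \<longrightarrow> dist (apply_bcontfun v' x) (apply_bcontfun v x) < e"
    using \<open>e > 0\<close> dist_bounded by (meson le_less_trans UNIV_I)
qed

lemma closed_S: "closed {v::real \<Rightarrow>\<^sub>C real. odd_fun (apply_bcontfun v) \<and> periodic_fun T (apply_bcontfun v)}"
proof -
  have c1: "closed {v::real \<Rightarrow>\<^sub>C real. \<forall>x. apply_bcontfun v (-x) = - apply_bcontfun v x}"
    by (intro closed_Collect_all closed_Collect_eq eval_cont continuous_on_minus)
  have c2: "closed {v::real \<Rightarrow>\<^sub>C real. \<forall>x. apply_bcontfun v (x + T) = apply_bcontfun v x}"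
    by (intro closed_Collect_all closed_Collect_eq eval_cont)
  have "{v::real \<Rightarrow>\<^sub>C real. odd_fun (apply_bcontfun v) \<and> periodic_fun T (apply_bcontfun v)}
    = {v. \<forall>x. apply_bcontfun v (-x) = - apply_bcontfun v x} \<inter> {v. \<forall>x. apply_bcontfun v (x + T) = apply_bcontfun v x}"
    unfolding odd_fun_def periodic_fun_def by auto
  then show ?thesis using c1 c2 by (simp add: closed_Int)
qed


theorem theorem2:
  fixes T :: real and g g' k :: "real \<Rightarrow> real"
  assumes "T > 0"
    and "C1_with_deriv g g'"
    and "odd_fun g"
    and "\<exists>c < 2 / T^2. \<forall>x. \<bar>g' x\<bar> \<le> c"
    and "continuous_on UNIV k"
    and "odd_fun k"
    and "periodic_fun T k"
    and "(1 / T) * integral {0..T} k = 0"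
  shows "\<exists>!u. C2_solution g k u \<and> odd_fun u \<and> periodic_fun T u"
proof -
  note Tpos = assms(1) and kc = assms(5) and kod = assms(6) and kper = assms(7)
  define l where "l = T / 2"
  have T: "T = 2 * l" and l: "l > 0" using Tpos unfolding l_def by auto
  have l0: "l \<noteq> 0" using l by simp
  have gd: "\<And>x. (g has_real_derivative g' x) (at x)" using assms(2) unfolding C1_with_deriv_def by blast
  have gc: "continuous_on UNIV g" by (rule deriv_cont[OF gd])
  obtain c where c: "c < 2 / T^2" "\<forall>x. \<bar>g' x\<bar> \<le> c" using assms(4) by blast
  have c0: "0 \<le> c" using c(2) by (meson abs_ge_zero order_trans)
  have lip: "\<And>x y. \<bar>g x - g y\<bar> \<le> c * \<bar>x - y\<bar>" by (rule lipschitz_g[OF gd c(2)])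
  have god: "\<And>x. g (-x) = - g x" using assms(3) unfolding odd_fun_def by blast
  define F where "F v = (\<lambda>s. k s - g (v s))" for v :: "real \<Rightarrow> real"
  have Fc: "continuous_on UNIV (F v)" if "continuous_on UNIV v" for v
    unfolding F_def by (intro continuous_intros kc continuous_on_compose2[OF gc that]) auto
  have Fod: "odd_fun (F v)" if "odd_fun v" for v
    using that kod god unfolding F_def odd_fun_def by simp
  have Fper: "periodic_fun T (F v)" if "periodic_fun T v" for v
    using that kper unfolding F_def periodic_fun_def by simp
  define S where "S = {v::real \<Rightarrow>\<^sub>C real. odd_fun (apply_bcontfun v) \<and> periodic_fun T (apply_bcontfun v)}"
  define \<Phi> where "\<Phi> v = Bcontfun (WW l (F (apply_bcontfun v)))" for v
  have inb: "WW l (F (apply_bcontfun v)) \<in> bcontfun" if "v \<in> S" for v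
    using that unfolding S_def
    by (intro WW_bcontfun[OF Fc Fod Fper T l]) auto
  have Phi_eq: "apply_bcontfun (\<Phi> v) = WW l (F (apply_bcontfun v))" if "v \<in> S" for v
    unfolding \<Phi>_def using inb[OF that] by (rule Bcontfun_inverse)
  have complete: "complete S" unfolding S_def by (rule complete_eq_closed[THEN iffD2, OF closed_S])
  have ne: "S \<noteq> {}"
  proof -
    have "const_bcontfun 0 \<in> S" unfolding S_def odd_fun_def periodic_fun_def
      by (simp add: const_bcontfun.rep_eq)
    then show ?thesis by blast
  qed
  have q0: "0 \<le> 2 * c * l^2" using c0 by simp
  have q1: "2 * c * l^2 < 1"
  proof -
    have "c < 2 / (2 * l)^2" using c(1) T by simp
    then have "c < 1 / (2 * l^2)" by (simp add: power2_eq_square)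
    then show ?thesis using l by (simp add: field_simps)
  qed
  have maps: "\<Phi> ` S \<subseteq> S"
  proof
    fix y assume "y \<in> \<Phi> ` S"
    then obtain v where v: "v \<in> S" "y = \<Phi> v" by blast
    have vs: "odd_fun (apply_bcontfun v)" "periodic_fun T (apply_bcontfun v)" using v(1) unfolding S_def by auto
    show "y \<in> S" unfolding S_def v(2)
      using WW_odd[OF Fc Fod[OF vs(1)] l0] WW_periodic[OF Fc Fod[OF vs(1)] Fper[OF vs(2)] T l]
      by (simp add: Phi_eq[OF v(1)])
  qed
  have contr: "dist (\<Phi> x) (\<Phi> y) \<le> (2 * c * l^2) * dist x y" if "x \<in> S" "y \<in> S" for x y
  proof (rule dist_bound)
    fix t
    have xs: "odd_fun (apply_bcontfun x)" "periodic_fun T (apply_bcontfun x)" using that(1) unfolding S_def by auto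
    have ys: "odd_fun (apply_bcontfun y)" "periodic_fun T (apply_bcontfun y)" using that(2) unfolding S_def by auto
    define f where "f = (\<lambda>s. F (apply_bcontfun x) s - F (apply_bcontfun y) s)"
    have fc: "continuous_on UNIV f" unfolding f_def using Fc by (intro continuous_intros) auto
    have fod: "odd_fun f" using Fod[OF xs(1)] Fod[OF ys(1)] unfolding f_def odd_fun_def by simp
    have fper: "periodic_fun T f" using Fper[OF xs(2)] Fper[OF ys(2)] unfolding f_def periodic_fun_def by simp
    have M: "\<forall>s\<in>{0..l}. \<bar>f s\<bar> \<le> c * dist x y"
    proof
      fix s
      have "\<bar>f s\<bar> = \<bar>g (apply_bcontfun y s) - g (apply_bcontfun x s)\<bar>" unfolding f_def F_def by simp
      also have "\<dots> \<le> c * \<bar>apply_bcontfun y s - apply_bcontfun x s\<bar>" by (rule lip)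
      also have "\<dots> \<le> c * dist x y"
        using dist_bounded[of x s y] c0 by (intro mult_left_mono) (auto simp: dist_real_def abs_minus_commute)
      finally show "\<bar>f s\<bar> \<le> c * dist x y" .
    qed
    have "dist (apply_bcontfun (\<Phi> x) t) (apply_bcontfun (\<Phi> y) t) = \<bar>WW l f t\<bar>"
      unfolding Phi_eq[OF that(1)] Phi_eq[OF that(2)] f_def dist_real_def
      by (subst WW_diff) (use Fc in auto)
    also have "\<dots> \<le> 2 * (c * dist x y) * l^2" by (rule WW_bound[OF fc fod fper T l M])
    finally show "dist (apply_bcontfun (\<Phi> x) t) (apply_bcontfun (\<Phi> y) t) \<le> (2 * c * l^2) * dist x y"
      by (simp add: algebra_simps)
  qed
  have bf: "\<exists>!x\<in>S. \<Phi> x = x" by (rule Banach_fix[OF complete ne q0 q1 maps contr])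
  then obtain u0 where u0: "u0 \<in> S" "\<Phi> u0 = u0" by blast
  define u where "u = apply_bcontfun u0"
  have uS: "odd_fun u" "periodic_fun T u" using u0(1) unfolding S_def u_def by auto
  have ucont: "continuous_on UNIV u" unfolding u_def by simp
  have ufix: "u = WW l (F u)" using Phi_eq[OF u0(1)] u0(2) unfolding u_def by simp
  have sol: "C2_solution g k u"
    unfolding C2_solution_def
  proof (intro exI conjI allI)
    fix t
    show "(u has_real_derivative (prim (F u) t - AA (F u) l / l)) (at t)"
      by (subst ufix, rule WW_deriv(1)[OF Fc[OF ucont] l0])
    show "((\<lambda>t. prim (F u) t - AA (F u) l / l) has_real_derivative F u t) (at t)"
      by (rule WW_deriv(2)[OF Fc[OF ucont] l0])
    show "F u t + g (u t) = k t" unfolding F_def by simp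
  next
    show "continuous_on UNIV (F u)" by (rule Fc[OF ucont])
  qed
  show ?thesis
  proof (rule ex1I[of _ u])
    show "C2_solution g k u \<and> odd_fun u \<and> periodic_fun T u" using sol uS by blast
  next
    fix w assume w: "C2_solution g k w \<and> odd_fun w \<and> periodic_fun T w"
    then obtain w1 w2 where d1: "\<And>t. (w has_real_derivative w1 t) (at t)"
      and d2: "\<And>t. (w1 has_real_derivative w2 t) (at t)" and eq: "\<And>t. w2 t + g (w t) = k t"
      unfolding C2_solution_def by blast
    have wc: "continuous_on UNIV w" by (rule deriv_cont[OF d1])
    have wfix: "w = WW l (F w)"
      using fixed_char[OF d1 d2 eq _ _ T l Fc[OF wc, unfolded F_def]] w unfolding F_def by blast
    have wb: "w \<in> bcontfun"
      by (subst wfix, rule WW_bcontfun[OF Fc[OF wc] Fod Fper T l]) (use w in auto)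
    define w0 where "w0 = Bcontfun w"
    have w0w: "apply_bcontfun w0 = w" unfolding w0_def using wb by (rule Bcontfun_inverse)
    have w0S: "w0 \<in> S" unfolding S_def using w w0w by simp
    have "\<Phi> w0 = w0"
      by (rule bcontfun_eqI) (simp add: Phi_eq[OF w0S] w0w wfix[symmetric])
    then have "w0 = u0" using bf u0 w0S by blast
    then show "w = u" using w0w unfolding u_def by simp
  qed
qed


end
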